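(* Fix $p\in(0,1)$ and consider the Alternating Path Randomized Design. Let $\mathcal{P}_i=(v_{i,1},\dots,v_{i,k(i)+1})$ be a component and write $y_j=Y_{v_{i,j},v_{i,j+1}}$ for $j=1,\dots,k(i)$. If $\mathcal{P}_i$ is a path ($v_{i,k(i)+1}\neq v_{i,1}$), then \[\mathrm{Var}(\hat\Gamma_i)=\frac1p\sum_{j=1}^{k(i)}y_j^2+2\sum_{1\le j<q\le k(i)}p^{q-j-1}y_jy_q.\] If $\mathcal{P}_i$ is a cycle, then, with $k=k(i)$, \[\mathrm{Var}(\hat\Gamma_i)=\frac1p\sum_{j=1}^{k-1}y_j^2+2\sum_{1\le j<q\le k-1}p^{q-j-1}y_jy_q+\frac{p^2+2p-p^{k-1}}{1+p^{k-1}}\,y_k^2+2\sum_{j=1}^{k-1}(-1)^j\Big(\frac{(1-(-p)^{k-1-j})(1-(-p)^{j-1})}{1+p^{k-1}}-1\Big)y_jy_k.\]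
   Context: Setting: $2N$ agents; $\mathbb{M}^t,\mathbb{M}^c$ are one-to-one matchings (sets of unordered pairs of distinct agents, each agent in at most one pair); each pair $(a,b)$ has a fixed real potential outcome $Y_{a,b}$. The disagreement set $\triangle\mathbb{M}^{(t,c)}=(\mathbb{M}^t\cup\mathbb{M}^c)\setminus(\mathbb{M}^t\cap\mathbb{M}^c)$, viewed as a graph, has connected components $\mathcal{P}_1,\dots,\mathcal{P}_m$, each an alternating path or cycle: a sequence $(v_{i,1},\dots,v_{i,k(i)+1})$ whose consecutive pairs $e_{i,j}=(v_{i,j},v_{i,j+1})$, $j=1,\dots,k(i)$, are its edges, alternating between $\triangle\mathbb{M}^{(t,c)}_t=\triangle\mathbb{M}^{(t,c)}\cap\mathbb{M}^t$ and $\triangle\mathbb{M}^{(t,c)}_c=\triangle\mathbb{M}^{(t,c)}\cap\mathbb{M}^c$; a cycle if $v_{i,1}=v_{i,k(i)+1}$, a path otherwise. Alternating Path Randomized Design with parameter $p$: indicators $W_{i,j}\in\{0,1\}$, independent across components; within $\mathcal{P}_i$, $\mathbb{P}(W_{i,1}=1)=p/(1+p)$; for $2\le j\le k(i)$ (path) or $2\le j\le k(i)-1$ (cycle), conditionally on $W_{i,1},\dots,W_{i,j-1}$, $W_{i,j}=1$ with probability $p$ if $W_{i,j-1}=0$ and $W_{i,j}=0$ if $W_{i,j-1}=1$; for a cycle, $W_{i,k(i)}=1$ iff $W_{i,1}=W_{i,k(i)-1}=0$. Path-level Horvitz–Thompson estimator: $\hat\Gamma_i=\sum_{j:\,e_{i,j}\in\triangle\mathbb{M}^{(t,c)}_t}\frac{W_{i,j}Y_{e_{i,j}}}{\mathbb{P}(W_{i,j}=1)}-\sum_{j:\,e_{i,j}\in\triangle\mathbb{M}^{(t,c)}_c}\frac{W_{i,j}Y_{e_{i,j}}}{\mathbb{P}(W_{i,j}=1)}$.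 *)

theory Defs
  imports "HOL-Probability.Probability"
begin

text \<open>Unordered pairs of agents are represented as two-element sets.\<close>

definition is_matching :: "'a set \<Rightarrow> 'a set set \<Rightarrow> bool" where
  "is_matching A M \<longleftrightarrow>
     (\<forall>e\<in>M. \<exists>a b. a \<in> A \<and> b \<in> A \<and> a \<noteq> b \<and> e = {a, b}) \<and>
     (\<forall>e\<in>M. \<forall>e'\<in>M. e \<noteq> e' \<longrightarrow> e \<inter> e' = {})"

definition disagree :: "'a set set \<Rightarrow> 'a set set \<Rightarrow> 'a set set" where
  "disagree Mt Mc = (Mt \<union> Mc) - (Mt \<inter> Mc)"

definition disagree_t :: "'a set set \<Rightarrow> 'a set set \<Rightarrow> 'a set set" where
  "disagree_t Mt Mc = disagree Mt Mc \<inter> Mt"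

definition disagree_c :: "'a set set \<Rightarrow> 'a set set \<Rightarrow> 'a set set" where
  "disagree_c Mt Mc = disagree Mt Mc \<inter> Mc"

text \<open>Edge j (1-based) of the vertex sequence v_1, ..., v_(k+1).\<close>
definition edge :: "(nat \<Rightarrow> 'a) \<Rightarrow> nat \<Rightarrow> 'a set" where
  "edge v j = {v j, v (Suc j)}"

text \<open>(v_1,...,v_(k+1)) is an alternating path or cycle that forms a connected
  component of the disagreement graph.\<close>
definition is_component ::
  "'a set set \<Rightarrow> 'a set set \<Rightarrow> (nat \<Rightarrow> 'a) \<Rightarrow> nat \<Rightarrow> bool" where
  "is_component Mt Mc v k \<longleftrightarrow>
     k \<ge> 1 \<and>
     (if v (k + 1) = v 1 then inj_on v {1..k} else inj_on v {1..k+1}) \<and>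
     (\<forall>j\<in>{1..k}. edge v j \<in> disagree Mt Mc) \<and>
     (\<forall>j\<in>{1..<k}. edge v j \<in> disagree_t Mt Mc \<longleftrightarrow> edge v (Suc j) \<in> disagree_c Mt Mc) \<and>
     (\<forall>e\<in>disagree Mt Mc. (\<exists>j\<in>{1..k+1}. v j \<in> e) \<longrightarrow> (\<exists>j\<in>{1..k}. e = edge v j))"

fun apr_chain :: "real \<Rightarrow> nat \<Rightarrow> bool \<Rightarrow> bool list pmf" where
  "apr_chain p 0 b = return_pmf []"
| "apr_chain p (Suc n) b =
     do { w \<leftarrow> (if b then return_pmf False else bernoulli_pmf p);
          ws \<leftarrow> apr_chain p n w;
          return_pmf (w # ws) }"

text \<open>Alternating Path Randomized Design on a path with k edges:
  list entry j-1 is W_(i,j).\<close>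
definition apr_path :: "real \<Rightarrow> nat \<Rightarrow> bool list pmf" where
  "apr_path p k =
     do { w1 \<leftarrow> bernoulli_pmf (p / (1 + p));
          ws \<leftarrow> apr_chain p (k - 1) w1;
          return_pmf (w1 # ws) }"

definition apr_cycle :: "real \<Rightarrow> nat \<Rightarrow> bool list pmf" where
  "apr_cycle p k =
     do { w1 \<leftarrow> bernoulli_pmf (p / (1 + p));
          ws \<leftarrow> apr_chain p (k - 2) w1;
          return_pmf (w1 # ws @ [\<not> w1 \<and> \<not> last (w1 # ws)]) }"

definition apr_design ::
  "real \<Rightarrow> (nat \<Rightarrow> 'a) \<Rightarrow> nat \<Rightarrow> bool list pmf" where
  "apr_design p v k = (if v (k + 1) = v 1 then apr_cycle p k else apr_path p k)"

definition HT_est ::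
  "'a set set \<Rightarrow> 'a set set \<Rightarrow> ('a set \<Rightarrow> real) \<Rightarrow> bool list pmf \<Rightarrow>
   (nat \<Rightarrow> 'a) \<Rightarrow> nat \<Rightarrow> bool list \<Rightarrow> real" where
  "HT_est Mt Mc Y D v k W =
     (\<Sum>j\<in>{j\<in>{1..k}. edge v j \<in> disagree_t Mt Mc}.
        (if W ! (j - 1) then 1 else 0) * Y (edge v j) / measure_pmf.prob D {w. w ! (j - 1)})
   - (\<Sum>j\<in>{j\<in>{1..k}. edge v j \<in> disagree_c Mt Mc}.
        (if W ! (j - 1) then 1 else 0) * Y (edge v j) / measure_pmf.prob D {w. w ! (j - 1)})"

end

theory Submission
  imports Defs
begin


definition rr :: "real \<Rightarrow> bool \<Rightarrow> nat \<Rightarrow> real" where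
  "rr p b d = p/(1+p) + (of_bool b - p/(1+p)) * (-p)^d"

definition RR :: "real \<Rightarrow> bool \<Rightarrow> nat \<Rightarrow> bool \<Rightarrow> real" where
  "RR p b d a = (if a then rr p b d else 1 - rr p b d)"

definition SS :: "real \<Rightarrow> bool \<Rightarrow> real" where
  "SS p a = (if a then p/(1+p) else 1/(1+p))"

definition step :: "real \<Rightarrow> bool \<Rightarrow> bool pmf" where
  "step p b = (if b then return_pmf False else bernoulli_pmf p)"

lemma chain_Suc: "apr_chain p (Suc n) b = bind_pmf (step p b) (\<lambda>w. map_pmf (Cons w) (apr_chain p n w))"
  by (simp add: map_pmf_def step_def)

declare apr_chain.simps(2)[simp del]

lemma chain_len: "ws \<in> set_pmf (apr_chain p n b) \<Longrightarrow> length ws = n"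
  by (induction n arbitrary: b ws) (auto simp: chain_Suc)

lemma finite_len: "finite {xs :: bool list. length xs = n}"
  using finite_lists_length_eq[of "UNIV :: bool set" n] by simp

lemma chain_fin: "finite (set_pmf (apr_chain p n b))"
  by (rule finite_subset[OF _ finite_len[of n]]) (auto dest: chain_len)

lemma exp_cong: "(\<And>x. x \<in> set_pmf M \<Longrightarrow> f x = g x) \<Longrightarrow>
   measure_pmf.expectation M f = measure_pmf.expectation M (g :: _ \<Rightarrow> real)"
  by (rule integral_cong_AE) (auto simp: AE_measure_pmf_iff)

lemma pmf_step:
  assumes "0 \<le> p" "p \<le> 1"
  shows "pmf (step p b) a = (if b then (if a then 0 else 1) else (if a then p else 1 - p))"
  using assms by (auto simp: step_def pmf_return)

lemma exp_chain_Suc: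
  assumes "0 \<le> p" "p \<le> 1"
  shows "measure_pmf.expectation (apr_chain p (Suc n) b) h =
     pmf (step p b) True * measure_pmf.expectation (apr_chain p n True) (\<lambda>ws. h (True # ws))
   + pmf (step p b) False * measure_pmf.expectation (apr_chain p n False) (\<lambda>ws. h (False # ws))"
proof -
  have "measure_pmf.expectation (apr_chain p (Suc n) b) h =
     (\<Sum>a\<in>UNIV. pmf (step p b) a *\<^sub>R measure_pmf.expectation (map_pmf (Cons a) (apr_chain p n a)) h)"
    unfolding chain_Suc by (rule pmf_expectation_bind) (auto simp: chain_fin)
  also have "\<dots> = pmf (step p b) True * measure_pmf.expectation (apr_chain p n True) (\<lambda>ws. h (True # ws))
   + pmf (step p b) False * measure_pmf.expectation (apr_chain p n False) (\<lambda>ws. h (False # ws))"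
    by (simp add: UNIV_bool)
  finally show ?thesis .
qed

lemma RR_rec:
  assumes "0 < p" "p < 1"
  shows "pmf (step p b) True * RR p True d a + pmf (step p b) False * RR p False d a = RR p b (Suc d) a"
proof -
  have h0: "1 + p \<noteq> 0" using assms by simp
  show ?thesis using assms h0 
    apply (cases b; cases a) 
    apply (simp_all add: pmf_step RR_def rr_def less_imp_le divide_simps)
    apply (simp_all add: algebra_simps)
    done
qed

lemma RR_one:
  assumes "0 < p" "p < 1"
  shows "pmf (step p b) a = RR p b (Suc 0) a"
proof -
  have h0: "1 + p \<noteq> 0" using assms by simp
  show ?thesis using assms h0 
    apply (cases b; cases a) 
    apply (simp_all add: pmf_step RR_def rr_def less_imp_le divide_simps)
    apply (simp_all add: algebra_simps)
    done
qed

lemma markov: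
  assumes "0 < p" "p < 1" "i < n"
  shows "measure_pmf.expectation (apr_chain p n b) (\<lambda>ws. of_bool (ws ! i = a) * g (drop (Suc i) ws))
       = RR p b (Suc i) a * measure_pmf.expectation (apr_chain p (n - Suc i) a) g"
  using assms(3)
proof (induction i arbitrary: b n)
  case 0
  then obtain n' where n: "n = Suc n'" by (cases n) auto
  show ?case using assms unfolding n
    by (cases a) (simp_all add: exp_chain_Suc RR_one)
next
  case (Suc i)
  then obtain n' where n: "n = Suc n'" and i: "i < n'" by (cases n) auto
  show ?case using assms unfolding n
    apply (simp add: exp_chain_Suc Suc.IH[OF i])
    apply (simp flip: RR_rec[OF assms(1,2), of b "Suc i" a] add: algebra_simps)
    done
qed

lemma exp_one: "measure_pmf.expectation M (\<lambda>_. 1::real) = 1"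
  by simp

lemma markov1:
  assumes "0 < p" "p < 1" "j < n"
  shows "measure_pmf.expectation (apr_chain p n b) (\<lambda>ws. of_bool (ws ! j = c)) = RR p b (Suc j) c"
  using markov[OF assms, of b c "\<lambda>_. 1"] by simp

lemma markov2:
  assumes "0 < p" "p < 1" "i < j" "j < n"
  shows "measure_pmf.expectation (apr_chain p n b) (\<lambda>ws. of_bool (ws ! i = a) * of_bool (ws ! j = c))
     = RR p b (Suc i) a * RR p a (j - i) c"
proof -
  have "measure_pmf.expectation (apr_chain p n b) (\<lambda>ws. of_bool (ws ! i = a) * of_bool (ws ! j = c) :: real)
    = measure_pmf.expectation (apr_chain p n b) (\<lambda>ws. of_bool (ws ! i = a) * 
          (\<lambda>ws'. of_bool (ws' ! (j - Suc i) = c)) (drop (Suc i) ws))"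
    by (rule exp_cong) (use assms in \<open>auto dest!: chain_len\<close>)
  also have "\<dots> = RR p b (Suc i) a * RR p a (Suc (j - Suc i)) c"
    using assms by (subst markov) (auto simp: markov1)
  finally show ?thesis using assms by (simp add: Suc_diff_Suc)
qed

lemma markov3:
  assumes "0 < p" "p < 1" "i < j" "j < l" "l < n"
  shows "measure_pmf.expectation (apr_chain p n b) 
      (\<lambda>ws. of_bool (ws ! i = a) * (of_bool (ws ! j = c) * of_bool (ws ! l = e)))
     = RR p b (Suc i) a * (RR p a (j - i) c * RR p c (l - j) e)"
proof -
  have "measure_pmf.expectation (apr_chain p n b) (\<lambda>ws. of_bool (ws ! i = a) * (of_bool (ws ! j = c) * of_bool (ws ! l = e)) :: real)
    = measure_pmf.expectation (apr_chain p n b) (\<lambda>ws. of_bool (ws ! i = a) * 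
          (\<lambda>ws'. of_bool (ws' ! (j - Suc i) = c) * of_bool (ws' ! (l - Suc i) = e)) (drop (Suc i) ws))"
    by (rule exp_cong) (use assms in \<open>auto dest!: chain_len\<close>)
  also have "\<dots> = RR p b (Suc i) a * (RR p a (Suc (j - Suc i)) c * RR p c (l - Suc i - (j - Suc i)) e)"
    using assms by (subst markov) (auto simp: markov2)
  finally show ?thesis using assms by (simp add: Suc_diff_Suc)
qed

lemma step_stat:
  assumes "0 < p" "p < 1"
  shows "bind_pmf (bernoulli_pmf (p/(1+p))) (step p) = bernoulli_pmf (p/(1+p))"
proof (rule pmf_eqI)
  fix x
  have h0: "1 + p \<noteq> 0" using assms by simp
  have le: "0 \<le> p/(1+p)" "p/(1+p) \<le> 1" using assms by auto
  show "pmf (bind_pmf (bernoulli_pmf (p/(1+p))) (step p)) x = pmf (bernoulli_pmf (p/(1+p))) x"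
    unfolding pmf_bind using assms h0
    apply (cases x) 
    apply (simp_all add: pmf_step less_imp_le le)
    apply (simp_all add: divide_simps)
    done
qed

lemma path_eq:
  assumes "0 < p" "p < 1" "1 \<le> m"
  shows "apr_path p m = bind_pmf (bernoulli_pmf (p/(1+p))) (apr_chain p m)"
proof -
  obtain m' where m: "m = Suc m'" using assms by (cases m) auto
  have "bind_pmf (bernoulli_pmf (p/(1+p))) (apr_chain p m)
     = bind_pmf (bind_pmf (bernoulli_pmf (p/(1+p))) (step p)) (\<lambda>w. map_pmf (Cons w) (apr_chain p m' w))"
    unfolding m chain_Suc bind_assoc_pmf ..
  also have "\<dots> = apr_path p m"
    unfolding step_stat[OF assms(1,2)] apr_path_def m by (simp add: map_pmf_def)
  finally show ?thesis ..
qed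

lemma path_len: "1 \<le> m \<Longrightarrow> l \<in> set_pmf (apr_path p m) \<Longrightarrow> length l = m"
  unfolding apr_path_def by (auto dest: chain_len)

lemma path_fin: "finite (set_pmf (apr_path p m))"
  unfolding apr_path_def by (auto simp: chain_fin)

lemma exp_path:
  assumes "0 < p" "p < 1" "1 \<le> m"
  shows "measure_pmf.expectation (apr_path p m) h = 
    p/(1+p) * measure_pmf.expectation (apr_chain p m True) h
    + (1 - p/(1+p)) * measure_pmf.expectation (apr_chain p m False) h"
proof -
  have le: "0 \<le> p/(1+p)" "p/(1+p) \<le> 1" using assms by auto
  have "measure_pmf.expectation (apr_path p m) h = 
    (\<Sum>a\<in>UNIV. pmf (bernoulli_pmf (p/(1+p))) a *\<^sub>R measure_pmf.expectation (apr_chain p m a) h)"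
    unfolding path_eq[OF assms] by (rule pmf_expectation_bind) (auto simp: chain_fin)
  then show ?thesis using le by (simp add: UNIV_bool)
qed

lemma stat:
  assumes "0 < p" "p < 1"
  shows "p/(1+p) * RR p True d a + (1 - p/(1+p)) * RR p False d a = SS p a"
proof -
  have h0: "1 + p \<noteq> 0" using assms by simp
  show ?thesis using assms h0 
    apply (cases a) 
    apply (simp_all add: SS_def RR_def rr_def divide_simps)
    apply (simp_all add: algebra_simps)
    done
qed

lemma path1:
  assumes "0 < p" "p < 1" "i < m"
  shows "measure_pmf.expectation (apr_path p m) (\<lambda>l. of_bool (l ! i = a)) = SS p a"
  using assms by (simp add: exp_path markov1 stat[OF assms(1,2)] flip: times_divide_eq_left)

lemma path2:
  assumes "0 < p" "p < 1" "i < j" "j < m"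
  shows "measure_pmf.expectation (apr_path p m) (\<lambda>l. of_bool (l ! i = a) * of_bool (l ! j = c))
     = SS p a * RR p a (j - i) c"
  using assms by (simp add: exp_path markov2 flip: stat[OF assms(1,2), of "Suc i" a] add: algebra_simps)

lemma path3:
  assumes "0 < p" "p < 1" "i < j" "j < l" "l < m"
  shows "measure_pmf.expectation (apr_path p m) 
      (\<lambda>ws. of_bool (ws ! i = a) * (of_bool (ws ! j = c) * of_bool (ws ! l = e)))
     = SS p a * (RR p a (j - i) c * RR p c (l - j) e)"
  using assms by (simp add: exp_path markov3 flip: stat[OF assms(1,2), of "Suc i" a] add: algebra_simps)

lemma cycle_eq:
  assumes "2 \<le> k"
  shows "apr_cycle p k = map_pmf (\<lambda>l. l @ [\<not> hd l \<and> \<not> last l]) (apr_path p (k - 1))"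
proof -
  have "k - 1 - 1 = k - 2" by simp
  then show ?thesis
    unfolding apr_cycle_def apr_path_def by (simp add: map_bind_pmf map_return_pmf)
qed



lemma prob_exp: "measure_pmf.prob D {w. P w} = measure_pmf.expectation D (\<lambda>w. of_bool (P w) :: real)"
proof -
  have "(\<lambda>w. of_bool (P w) :: real) = indicator {w. P w}" by (auto simp: indicator_def)
  then show ?thesis by simp
qed

lemma var_formula:
  fixes c :: "nat \<Rightarrow> real" and Z :: "nat \<Rightarrow> 'b \<Rightarrow> real"
  assumes "finite (set_pmf D)" "finite S"
  shows "measure_pmf.variance D (\<lambda>w. \<Sum>j\<in>S. c j * Z j w) =
    (\<Sum>j\<in>S. \<Sum>q\<in>S. c j * c q * (measure_pmf.expectation D (\<lambda>w. Z j w * Z q w)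
       - measure_pmf.expectation D (Z j) * measure_pmf.expectation D (Z q)))"
proof -
  have int: "\<And>f::'b\<Rightarrow>real. integrable (measure_pmf D) f"
    using assms(1) by (rule integrable_measure_pmf_finite)
  have h1: "measure_pmf.variance D (\<lambda>w. \<Sum>j\<in>S. c j * Z j w) =
     measure_pmf.expectation D (\<lambda>w. (\<Sum>j\<in>S. c j * Z j w)\<^sup>2) - (measure_pmf.expectation D (\<lambda>w. \<Sum>j\<in>S. c j * Z j w))\<^sup>2"
    by (rule measure_pmf.variance_eq) (auto intro: int)
  have h2: "measure_pmf.expectation D (\<lambda>w. (\<Sum>j\<in>S. c j * Z j w)\<^sup>2) = 
     measure_pmf.expectation D (\<lambda>w. \<Sum>j\<in>S. \<Sum>q\<in>S. c j * c q * (Z j w * Z q w))"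
    by (simp add: power2_eq_square sum_product algebra_simps)
  have h3: "measure_pmf.expectation D (\<lambda>w. \<Sum>j\<in>S. \<Sum>q\<in>S. c j * c q * (Z j w * Z q w)) 
     = (\<Sum>j\<in>S. \<Sum>q\<in>S. c j * c q * measure_pmf.expectation D (\<lambda>w. Z j w * Z q w))"
    by (simp add: integral_sum int)
  have h4: "measure_pmf.expectation D (\<lambda>w. \<Sum>j\<in>S. c j * Z j w) = (\<Sum>j\<in>S. c j * measure_pmf.expectation D (Z j))"
    by (simp add: integral_sum int)
  have "measure_pmf.variance D (\<lambda>w. \<Sum>j\<in>S. c j * Z j w) = 
    (\<Sum>j\<in>S. \<Sum>q\<in>S. c j * c q * measure_pmf.expectation D (\<lambda>w. Z j w * Z q w))
    - (\<Sum>j\<in>S. c j * measure_pmf.expectation D (Z j))\<^sup>2"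
    using h1 h2 h3 h4 by (simp only:)
  also have "\<dots> = (\<Sum>j\<in>S. \<Sum>q\<in>S. c j * c q * (measure_pmf.expectation D (\<lambda>w. Z j w * Z q w)
       - measure_pmf.expectation D (Z j) * measure_pmf.expectation D (Z q)))"
    by (simp add: power2_eq_square sum_product right_diff_distrib sum_subtractf mult_ac)
  finally show ?thesis .
qed

lemma sym_split:
  fixes f :: "nat \<Rightarrow> nat \<Rightarrow> real"
  assumes "\<And>j q. f j q = f q j"
  shows "(\<Sum>j\<in>{1..m}. \<Sum>q\<in>{1..m}. f j q) = (\<Sum>j=1..m. f j j) + 2 * (\<Sum>j=1..m. \<Sum>q=j+1..m. f j q)"
proof (induction m)
  case 0
  then show ?case by simp
next
  case (Suc m)
  have e: "{1..Suc m} = insert (Suc m) {1..m}" by auto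
  have a1: "(\<Sum>j\<in>{1..Suc m}. \<Sum>q\<in>{1..Suc m}. f j q) =
     f (Suc m) (Suc m) + (\<Sum>q\<in>{1..m}. f (Suc m) q) + (\<Sum>j\<in>{1..m}. f j (Suc m)) + (\<Sum>j\<in>{1..m}. \<Sum>q\<in>{1..m}. f j q)"
    unfolding e by (simp add: sum.distrib algebra_simps)
  have a2: "(\<Sum>q\<in>{1..m}. f (Suc m) q) = (\<Sum>j\<in>{1..m}. f j (Suc m))"
    using assms by simp
  have a3: "(\<Sum>j=1..Suc m. \<Sum>q=j+1..Suc m. f j q) = (\<Sum>j=1..m. \<Sum>q=j+1..Suc m. f j q)"
    by (simp add: e)
  have a4: "(\<Sum>j=1..m. \<Sum>q=j+1..Suc m. f j q) = (\<Sum>j=1..m. (\<Sum>q=j+1..m. f j q) + f j (Suc m))"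
    by (rule sum.cong) auto
  show ?case using Suc.IH unfolding a1 a2 a3 a4 by (simp add: e sum.distrib algebra_simps)
qed

lemma disagree_tc: "e \<in> disagree Mt Mc \<Longrightarrow> e \<in> disagree_c Mt Mc \<longleftrightarrow> e \<notin> disagree_t Mt Mc"
  by (auto simp: disagree_def disagree_t_def disagree_c_def)

lemma HT_form:
  assumes "\<forall>j\<in>{1..k}. edge v j \<in> disagree Mt Mc"
  shows "HT_est Mt Mc Y D v k = (\<lambda>W. \<Sum>j\<in>{1..k}.
     ((if edge v j \<in> disagree_t Mt Mc then 1 else -1) * Y (edge v j) /
        measure_pmf.expectation D (\<lambda>w. of_bool (w ! (j - 1)))) * of_bool (W ! (j - 1)))"
proof
  fix W
  show "HT_est Mt Mc Y D v k W = (\<Sum>j\<in>{1..k}.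
     ((if edge v j \<in> disagree_t Mt Mc then 1 else -1) * Y (edge v j) /
        measure_pmf.expectation D (\<lambda>w. of_bool (w ! (j - 1)))) * of_bool (W ! (j - 1)))"
    unfolding HT_est_def sum.inter_filter[OF finite_atLeastAtMost] prob_exp sum_subtractf[symmetric]
    by (rule sum.cong) (use assms in \<open>auto simp: of_bool_def disagree_def disagree_t_def disagree_c_def\<close>)
qed



lemma reorg: "(s * y / e) * (s' * y' / e') * (E - e * e') = (s * s') * (y * y') * ((E - e * e') / (e * e'))"
  for s y e s' y' e' E :: real
  by (simp add: field_simps)

lemma La:
  assumes "0 < p" shows "(p/(1+p) - p/(1+p) * (p/(1+p))) / (p/(1+p) * (p/(1+p))) = 1/(p::real)"
proof -
  have h0: "1 + p \<noteq> 0" "p \<noteq> 0" using assms by auto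
  show ?thesis using h0 by (simp add: divide_simps) (simp add: algebra_simps)
qed

lemma Lb:
  assumes "0 < p" "1 \<le> d"
  shows "(-1)^d * ((p/(1+p) * rr p True d - p/(1+p) * (p/(1+p))) / (p/(1+p) * (p/(1+p)))) = (p::real)^(d-1)"
proof -
  have h0: "1 + p \<noteq> 0" "p \<noteq> 0" using assms by auto
  obtain d' where d: "d = Suc d'" using assms by (cases d) auto
  have "(-1::real)^d' * (-p)^d' = p^d'" by (simp flip: power_mult_distrib)
  then show ?thesis using h0 unfolding d rr_def by (simp add: divide_simps) (simp add: algebra_simps)
qed

lemma sgn_prod:
  assumes "1 \<le> j" "j \<le> q" "s0 * s0 = (1::real)"
  shows "(s0 * (-1)^(j-1)) * (s0 * (-1)^(q-1)) = (-1::real)^(q-j)"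
proof -
  have "(j - 1) + (q - 1) = (q - j) + 2 * (j - 1)" using assms by simp
  then have "(-1::real)^(j-1) * (-1)^(q-1) = (-1)^(q-j)"
    by (metis power_add power_minus1_even mult_1_right)
  then show ?thesis using assms(3) by (simp add: algebra_simps)
qed

lemma path_sum:
  fixes e1 :: "nat \<Rightarrow> real" and e2 :: "nat \<Rightarrow> nat \<Rightarrow> real" and y sg :: "nat \<Rightarrow> real"
  assumes p: "0 < p" "p < 1"
    and e1: "\<And>j. j \<in> {1..m} \<Longrightarrow> e1 j = p/(1+p)"
    and e2d: "\<And>j. j \<in> {1..m} \<Longrightarrow> e2 j j = p/(1+p)"
    and e2o: "\<And>j q. j \<in> {1..m} \<Longrightarrow> q \<in> {1..m} \<Longrightarrow> j < q \<Longrightarrow> e2 j q = p/(1+p) * rr p True (q - j)"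
    and sym: "\<And>j q. e2 j q = e2 q j"
    and sg: "\<And>j. j \<in> {1..m} \<Longrightarrow> sg j = s0 * (-1)^(j-1)"
    and s0: "s0 * s0 = 1"
  shows "(\<Sum>j\<in>{1..m}. \<Sum>q\<in>{1..m}. (sg j * y j / e1 j) * (sg q * y q / e1 q) * (e2 j q - e1 j * e1 q))
     = (1 / p) * (\<Sum>j=1..m. (y j)\<^sup>2) + 2 * (\<Sum>j=1..m. \<Sum>q=j+1..m. p ^ (q - j - 1) * y j * y q)"
proof -
  let ?f = "\<lambda>j q. (sg j * y j / e1 j) * (sg q * y q / e1 q) * (e2 j q - e1 j * e1 q)"
  have "(\<Sum>j\<in>{1..m}. \<Sum>q\<in>{1..m}. ?f j q) = (\<Sum>j=1..m. ?f j j) + 2 * (\<Sum>j=1..m. \<Sum>q=j+1..m. ?f j q)"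
    by (rule sym_split) (simp add: sym algebra_simps)
  also have "(\<Sum>j=1..m. ?f j j) = (\<Sum>j=1..m. (1/p) * (y j)\<^sup>2)"
  proof (rule sum.cong)
    fix j assume j: "j \<in> {1..m}"
    have r: "?f j j = (sg j * sg j) * (y j * y j) * ((e2 j j - e1 j * e1 j) / (e1 j * e1 j))"
      by (rule reorg)
    have s: "sg j * sg j = 1" using sgn_prod[of j j s0] j s0 sg[OF j] by simp
    have t: "(e2 j j - e1 j * e1 j) / (e1 j * e1 j) = 1/p" using La[OF p(1)] e1[OF j] e2d[OF j] by simp
    show "?f j j = (1/p) * (y j)\<^sup>2" unfolding r s t by (simp add: power2_eq_square)
  qed simp
  also have "(\<Sum>j=1..m. \<Sum>q=j+1..m. ?f j q) = (\<Sum>j=1..m. \<Sum>q=j+1..m. p ^ (q - j - 1) * y j * y q)"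
  proof (intro sum.cong refl)
    fix j q assume j: "j \<in> {1..m}" and q: "q \<in> {j+1..m}"
    then have q': "q \<in> {1..m}" and jq: "j < q" by auto
    have "?f j q = (sg j * sg q) * (y j * y q) * ((e2 j q - e1 j * e1 q) / (e1 j * e1 q))"
      by (rule reorg)
    also have "sg j * sg q = (-1)^(q-j)" using sgn_prod[of j q s0] j jq s0 sg[OF j] sg[OF q'] by simp
    also have "(e2 j q - e1 j * e1 q) / (e1 j * e1 q) = (p/(1+p) * rr p True (q-j) - p/(1+p) * (p/(1+p))) / (p/(1+p) * (p/(1+p)))"
      using e1[OF j] e1[OF q'] e2o[OF j q' jq] by simp
    finally have "?f j q = ((-1)^(q-j) * ((p/(1+p) * rr p True (q-j) - p/(1+p) * (p/(1+p))) / (p/(1+p) * (p/(1+p))))) * (y j * y q)"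
      by (simp add: algebra_simps)
    also have "\<dots> = p^(q-j-1) * (y j * y q)" using Lb[OF p(1), of "q-j"] jq by simp
    finally show "?f j q = p ^ (q - j - 1) * y j * y q" by (simp add: algebra_simps)
  qed
  finally show ?thesis by (simp add: sum_distrib_left)
qed



lemma comp_k1: "is_component Mt Mc v k \<Longrightarrow> 1 \<le> k"
  unfolding is_component_def by blast

lemma comp_dis: "is_component Mt Mc v k \<Longrightarrow> j \<in> {1..k} \<Longrightarrow> edge v j \<in> disagree Mt Mc"
  unfolding is_component_def by blast

lemma comp_alt: "is_component Mt Mc v k \<Longrightarrow> j \<in> {1..<k} \<Longrightarrow>
   edge v j \<in> disagree_t Mt Mc \<longleftrightarrow> edge v (Suc j) \<in> disagree_c Mt Mc"
  unfolding is_component_def by blast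

lemma comp_inj: "is_component Mt Mc v k \<Longrightarrow> v (k + 1) = v 1 \<Longrightarrow> inj_on v {1..k}"
  unfolding is_component_def by presburger

lemma comp_parity:
  assumes "is_component Mt Mc v k" "1 \<le> j" "j \<le> k"
  shows "(edge v j \<in> disagree_t Mt Mc) \<longleftrightarrow> ((edge v 1 \<in> disagree_t Mt Mc) \<longleftrightarrow> odd j)"
  using assms(2,3)
proof (induction j rule: dec_induct)
  case base
  then show ?case by simp
next
  case (step j)
  have alt: "edge v j \<in> disagree_t Mt Mc \<longleftrightarrow> edge v (Suc j) \<in> disagree_c Mt Mc"
    using comp_alt[OF assms(1)] step by simp
  have "edge v (Suc j) \<in> disagree Mt Mc" using comp_dis[OF assms(1)] step by simp
  then have "edge v (Suc j) \<in> disagree_c Mt Mc \<longleftrightarrow> edge v (Suc j) \<notin> disagree_t Mt Mc"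
    by (rule disagree_tc)
  then show ?case using alt step by auto
qed

lemma comp_sg:
  assumes "is_component Mt Mc v k" "j \<in> {1..k}"
  shows "(if edge v j \<in> disagree_t Mt Mc then 1 else -1 :: real) =
    (if edge v 1 \<in> disagree_t Mt Mc then 1 else -1) * (-1)^(j-1)"
proof -
  have "odd j \<longleftrightarrow> even (j - 1)" using assms(2) by auto
  then show ?thesis using comp_parity[OF assms(1), of j] assms(2) by auto
qed

lemma matching_edge: assumes "is_matching A M" "e \<in> M" shows "\<exists>a b. a \<noteq> b \<and> e = {a, b}"
proof -
  have "\<forall>e\<in>M. \<exists>a b. a \<in> A \<and> b \<in> A \<and> a \<noteq> b \<and> e = {a, b}" using assms(1) unfolding is_matching_def by (rule conjunct1)
  then obtain a b where "a \<noteq> b" "e = {a, b}" using assms(2) by meson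
  then show ?thesis by blast
qed
lemma matching_disj: assumes "is_matching A M" "e \<in> M" "e' \<in> M" "e \<inter> e' \<noteq> {}" shows "e = e'"
proof -
  have "\<forall>e\<in>M. \<forall>e'\<in>M. e \<noteq> e' \<longrightarrow> e \<inter> e' = {}" using assms(1) unfolding is_matching_def by (rule conjunct2)
  then show ?thesis using assms(2-4) by meson
qed

lemma cycle_even:
  assumes comp: "is_component Mt Mc v k" and cyc: "v (k + 1) = v 1"
    and mt: "is_matching A Mt" and mc: "is_matching A Mc"
  shows "even k \<and> 4 \<le> k"
proof -
  have k1: "1 \<le> k" and inj: "inj_on v {1..k}" and dis: "\<And>j. j \<in> {1..k} \<Longrightarrow> edge v j \<in> disagree Mt Mc"
    using comp_k1[OF comp] comp_inj[OF comp cyc] comp_dis[OF comp] by auto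
  have two: "\<exists>a b. a \<noteq> b \<and> e = {a, b}" if "e \<in> disagree Mt Mc" for e
  proof (cases "e \<in> Mt")
    case True
    then show ?thesis by (rule matching_edge[OF mt])
  next
    case False
    then have "e \<in> Mc" using that by (auto simp: disagree_def)
    then show ?thesis by (rule matching_edge[OF mc])
  qed
  have n1: "k \<noteq> 1"
  proof
    assume "k = 1"
    then have e1: "edge v 1 = {v 1}" using cyc by (simp add: edge_def)
    have "edge v 1 \<in> disagree Mt Mc" using dis k1 by auto
    then obtain a b where ab: "a \<noteq> b" "edge v 1 = {a, b}" using two by meson
    then have "a \<in> {v 1}" "b \<in> {v 1}" using e1 by auto
    then show False using ab(1) by simp
  qed
  have n2: "k \<noteq> 2"
  proof
    assume k2: "k = 2"
    then have e: "edge v 2 = edge v 1" using cyc by (auto simp: edge_def numeral_2_eq_2)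
    have "edge v 1 \<in> disagree_t Mt Mc \<longleftrightarrow> edge v 2 \<in> disagree_c Mt Mc"
      using comp_alt[OF comp, of 1] k2 by (simp add: numeral_2_eq_2)
    moreover have "edge v 1 \<in> disagree Mt Mc" using dis k2 by auto
    ultimately show False using disagree_tc[of "edge v 1" Mt Mc] e by auto
  qed
  have ev: "even k"
  proof (rule ccontr)
    assume odd: "odd k"
    have k3: "3 \<le> k" using n1 n2 k1 by linarith
    have same: "edge v k \<in> disagree_t Mt Mc \<longleftrightarrow> edge v 1 \<in> disagree_t Mt Mc"
      using comp_parity[OF comp, of k] k1 odd by auto
    have d1: "edge v 1 \<in> disagree Mt Mc" and dk: "edge v k \<in> disagree Mt Mc" using dis k1 by auto
    have int: "edge v 1 \<inter> edge v k \<noteq> {}" using cyc by (auto simp: edge_def)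
    have eq: "edge v 1 = edge v k"
    proof (cases "edge v 1 \<in> disagree_t Mt Mc")
      case True
      then have "edge v 1 \<in> Mt" "edge v k \<in> Mt" using same by (auto simp: disagree_t_def)
      then show ?thesis using matching_disj[OF mt] int by meson
    next
      case False
      then have "edge v 1 \<in> disagree_c Mt Mc" "edge v k \<in> disagree_c Mt Mc"
        using same disagree_tc[OF d1] disagree_tc[OF dk] by auto
      then have "edge v 1 \<in> Mc" "edge v k \<in> Mc" by (auto simp: disagree_c_def)
      then show ?thesis using matching_disj[OF mc] int by meson
    qed
    then have eq2: "{v 1, v 2} = {v k, v 1}" using cyc by (simp add: edge_def numeral_2_eq_2)
    have "v 2 \<noteq> v 1" using inj_onD[OF inj, of 2 1] k3 by auto
    moreover have "v 2 \<noteq> v k" using inj_onD[OF inj, of 2 k] k3 by auto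
    moreover have "v 2 \<in> {v k, v 1}" using eq2 by (metis insertI1 insert_commute)
    ultimately show False by simp
  qed
  have "k \<noteq> 0" using k1 by simp
  then have "4 \<le> k" using ev n2 by presburger
  then show ?thesis using ev by simp
qed



lemma even_pow: "even d \<Longrightarrow> (-p)^d = (p::real)^d"
  by (simp add: power_minus_even)

lemma pi_simp: "0 < p \<Longrightarrow> 1 - p/(1+p) = 1/(1+(p::real))"
  by (simp add: field_simps)

lemma Lc:
  assumes "0 < p" "even k" "4 \<le> k"
  shows "SS p False * RR p False (k - 2) False = (1 + p^(k-1)) / (1+p)^2"
proof -
  have h0: "1 + p \<noteq> 0" using assms by simp
  define k' where "k' = k - 2"
  have k: "k = Suc (Suc k')" using assms(3) unfolding k'_def by arith
  have ev: "even k'" using assms(2) k by simp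
  have k1: "k - 1 = Suc k'" "k - 2 = k'" using k by auto
  have "RR p False k' False = 1 - p/(1+p) + p/(1+p) * p^k'"
    unfolding RR_def rr_def using even_pow[OF ev, of p] by (simp add: algebra_simps)
  also have "\<dots> = (1 + p * p^k') / (1+p)" using h0 by (simp add: field_simps)
  finally have r: "RR p False k' False = (1 + p * p^k') / (1+p)" .
  show ?thesis unfolding SS_def k1 r by (simp add: power2_eq_square)
qed

lemma Ld:
  fixes p s y e :: real
  assumes "0 < p" "s * s = 1" "e = (1 + p^(k-1)) / (1+p)^2"
  shows "(s * y / e) * (s * y / e) * (e - e * e) = (p\<^sup>2 + 2 * p - p ^ (k - 1)) / (1 + p ^ (k - 1)) * y\<^sup>2"
proof -
  have h0: "1 + p \<noteq> 0" using assms(1) by simp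
  have "0 \<le> p^(k-1)" using assms(1) by simp
  then have h1: "1 + p^(k-1) \<noteq> 0" by linarith
  have en: "e \<noteq> 0" using assms(3) h0 h1 by simp
  have "(s * y / e) * (s * y / e) * (e - e * e) = (s * s) * y\<^sup>2 * (1 / e - 1)"
    using en by (simp add: field_simps power2_eq_square)
  also have "1 / e = (1+p)^2 / (1 + p^(k-1))" using assms(3) by simp
  also have "(s * s) * y\<^sup>2 * ((1+p)^2 / (1 + p^(k-1)) - 1) = y\<^sup>2 * (((1+p)^2 - (1 + p^(k-1))) / (1 + p^(k-1)))"
    using assms(2) h1 by (simp add: diff_divide_distrib)
  also have "(1+p)^2 - (1 + p^(k-1)) = p\<^sup>2 + 2 * p - p ^ (k - 1)"
    by (simp add: power2_eq_square algebra_simps)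
  finally show ?thesis by simp
qed

lemma ratio: "Q \<noteq> 0 \<Longrightarrow> (Q * X - Q) / Q = X - (1::real)"
  by (simp add: diff_divide_distrib)

lemma Le:
  assumes "0 < p" "e = (1 + p^(k-1)) / (1+p)^2"
  shows "(SS p False * (RR p False a True * RR p True b False) - p/(1+p) * e) / (p/(1+p) * e)
     = (1 - (-p)^b) * (1 - (-p)^a) / (1 + p^(k-1)) - 1"
proof -
  have h0: "1 + p \<noteq> 0" "p \<noteq> 0" using assms(1) by auto
  have "0 \<le> p^(k-1)" using assms(1) by simp
  then have h1: "1 + p^(k-1) \<noteq> 0" by linarith
  have en: "p/(1+p) * e \<noteq> 0" using assms(2) h0 h1 by simp
  have r1: "RR p False a True = p/(1+p) * (1 - (-p)^a)" unfolding RR_def rr_def by (simp add: algebra_simps)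
  have r2a: "RR p True b False = (1 - p/(1+p)) * (1 - (-p)^b)" unfolding RR_def rr_def
    by (simp add: algebra_simps)
  have r2: "RR p True b False = 1/(1+p) * (1 - (-p)^b)" unfolding r2a pi_simp[OF assms(1)] ..
  have c1: "(1 + p^(k-1)) / (1+p)^2 * (((1 - (-p)^b) * (1 - (-p)^a)) / (1 + p^(k-1))) 
     = ((1 - (-p)^b) * (1 - (-p)^a)) / (1+p)^2" using h1 by simp
  have eqn: "SS p False * (RR p False a True * RR p True b False) = (p/(1+p) * e) * ((1 - (-p)^b) * (1 - (-p)^a) / (1 + p^(k-1)))"
    unfolding r1 r2 SS_def assms(2) mult.assoc c1 by (simp add: power2_eq_square)
  show ?thesis unfolding eqn by (rule ratio[OF en])
qed

lemma Le0:
  fixes p e :: real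
  assumes "0 < p" "e = (1 + p^(k-1)) / (1+p)^2"
  shows "(0 - p/(1+p) * e) / (p/(1+p) * e) = (0::real) / (1 + p^(k-1)) - 1"
proof -
  have h0: "1 + p \<noteq> 0" "p \<noteq> 0" using assms(1) by auto
  have "0 \<le> p^(k-1)" using assms(1) by simp
  then have h1: "1 + p^(k-1) \<noteq> 0" by linarith
  have en: "p/(1+p) * e \<noteq> 0" using assms(2) h0 h1 by simp
  show ?thesis using en by simp
qed

lemma split_last:
  fixes f :: "nat \<Rightarrow> nat \<Rightarrow> real"
  assumes "\<And>j q. f j q = f q j"
  shows "(\<Sum>j\<in>{1..Suc m}. \<Sum>q\<in>{1..Suc m}. f j q) =
     (\<Sum>j\<in>{1..m}. \<Sum>q\<in>{1..m}. f j q) + 2 * (\<Sum>j\<in>{1..m}. f j (Suc m)) + f (Suc m) (Suc m)"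
proof -
  have e: "{1..Suc m} = insert (Suc m) {1..m}" by auto
  have a1: "(\<Sum>j\<in>{1..Suc m}. \<Sum>q\<in>{1..Suc m}. f j q) =
     f (Suc m) (Suc m) + (\<Sum>q\<in>{1..m}. f (Suc m) q) + (\<Sum>j\<in>{1..m}. f j (Suc m)) + (\<Sum>j\<in>{1..m}. \<Sum>q\<in>{1..m}. f j q)"
    unfolding e by (simp add: sum.distrib algebra_simps)
  have a2: "(\<Sum>q\<in>{1..m}. f (Suc m) q) = (\<Sum>j\<in>{1..m}. f j (Suc m))"
    using assms by simp
  show ?thesis unfolding a1 a2 by simp
qed

lemma cyc_exp:
  fixes h :: "bool list \<Rightarrow> real"
  assumes "2 \<le> k"
  shows "measure_pmf.expectation (apr_cycle p k) h =
    measure_pmf.expectation (apr_path p (k-1)) (\<lambda>l. h (l @ [\<not> l ! 0 \<and> \<not> l ! (k-2)]))"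
proof -
  have "measure_pmf.expectation (apr_cycle p k) h =
    measure_pmf.expectation (apr_path p (k-1)) (\<lambda>l. h (l @ [\<not> hd l \<and> \<not> last l]))"
    unfolding cycle_eq[OF assms] by simp
  also have "\<dots> = measure_pmf.expectation (apr_path p (k-1)) (\<lambda>l. h (l @ [\<not> l ! 0 \<and> \<not> l ! (k-2)]))"
  proof (rule exp_cong)
    fix l assume "l \<in> set_pmf (apr_path p (k-1))"
    then have len: "length l = k - 1" using path_len assms by auto
    then have "l \<noteq> []" using assms by auto
    moreover have "k - 1 - 1 = k - 2" by simp
    ultimately have "hd l = l ! 0" "last l = l ! (k-2)" using len by (simp_all add: hd_conv_nth last_conv_nth)
    then show "h (l @ [\<not> hd l \<and> \<not> last l]) = h (l @ [\<not> l ! 0 \<and> \<not> l ! (k-2)])" by simp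
  qed
  finally show ?thesis .
qed



lemma neg1_pow: "even k \<Longrightarrow> j \<le> k \<Longrightarrow> (-1::real)^(k-j) = (-1)^j"
  by (cases "even j") (simp_all add: minus_one_power_iff)

lemma of_bool_sq: "(\<lambda>w. (of_bool (P w) :: real) * of_bool (P w)) = (\<lambda>w. of_bool (P w))"
  by (auto simp: fun_eq_iff)

theorem theorem1:
  fixes A :: "'a set" and N :: nat and Mt Mc :: "'a set set"
    and Y :: "'a set \<Rightarrow> real" and p :: real
    and v :: "nat \<Rightarrow> 'a" and k :: nat
  assumes "finite A" and "card A = 2 * N"
    and "is_matching A Mt" and "is_matching A Mc"
    and "0 < p" and "p < 1"
    and "is_component Mt Mc v k"
  defines "y \<equiv> (\<lambda>j. Y (edge v j))"
  defines "D \<equiv> apr_design p v k"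
  shows "(v (k + 1) \<noteq> v 1 \<longrightarrow>
            measure_pmf.variance D (HT_est Mt Mc Y D v k) =
              (1 / p) * (\<Sum>j=1..k. (y j)\<^sup>2)
              + 2 * (\<Sum>j=1..k. \<Sum>q=j+1..k. p ^ (q - j - 1) * y j * y q))
       \<and> (v (k + 1) = v 1 \<longrightarrow>
            measure_pmf.variance D (HT_est Mt Mc Y D v k) =
              (1 / p) * (\<Sum>j=1..k-1. (y j)\<^sup>2)
              + 2 * (\<Sum>j=1..k-1. \<Sum>q=j+1..k-1. p ^ (q - j - 1) * y j * y q)
              + (p\<^sup>2 + 2 * p - p ^ (k - 1)) / (1 + p ^ (k - 1)) * (y k)\<^sup>2
              + 2 * (\<Sum>j=1..k-1. (-1) ^ j *
                  ((1 - (-p) ^ (k - 1 - j)) * (1 - (-p) ^ (j - 1)) / (1 + p ^ (k - 1)) - 1)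
                  * y j * y k))"
proof -
  note comp = assms(7) and p0 = assms(5) and p1 = assms(6)
  have k1: "1 \<le> k" by (rule comp_k1[OF comp])
  define sg where "sg j = (if edge v j \<in> disagree_t Mt Mc then 1 else -1 :: real)" for j
  define s0 where "s0 = sg 1"
  have sgj: "\<And>j. j \<in> {1..k} \<Longrightarrow> sg j = s0 * (-1)^(j-1)"
    using comp_sg[OF comp] unfolding sg_def s0_def by blast
  have s0sq: "s0 * s0 = 1" unfolding s0_def sg_def by simp
  define e1 where "e1 j = measure_pmf.expectation D (\<lambda>w. of_bool (w ! (j - 1)) :: real)" for j
  define e2 where "e2 j q = measure_pmf.expectation D (\<lambda>w. of_bool (w ! (j - 1)) * of_bool (w ! (q - 1)) :: real)" for j q
  have e2sym: "\<And>j q. e2 j q = e2 q j" unfolding e2_def by (simp add: mult.commute)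
  have HT: "HT_est Mt Mc Y D v k = (\<lambda>W. \<Sum>j\<in>{1..k}. (sg j * y j / e1 j) * of_bool (W ! (j - 1)))"
    unfolding sg_def y_def e1_def by (rule HT_form) (use comp_dis[OF comp] in auto)
  have finD: "finite (set_pmf D)"
  proof (cases "v (k + 1) = v 1")
    case True
    then have "4 \<le> k" using cycle_even[OF comp True assms(3,4)] by simp
    then show ?thesis unfolding D_def apr_design_def using True
      by (simp add: cycle_eq path_fin)
  next
    case False
    then show ?thesis unfolding D_def apr_design_def by (simp add: path_fin)
  qed
  define f where "f j q = (sg j * y j / e1 j) * (sg q * y q / e1 q) * (e2 j q - e1 j * e1 q)" for j q
  have fsym: "\<And>j q. f j q = f q j" unfolding f_def using e2sym by (simp add: mult_ac)
  have V: "measure_pmf.variance D (HT_est Mt Mc Y D v k) = (\<Sum>j\<in>{1..k}. \<Sum>q\<in>{1..k}. f j q)"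
    unfolding HT f_def e2_def e1_def
    by (rule var_formula[OF finD finite_atLeastAtMost])
  have pathpart: "(\<Sum>j\<in>{1..m}. \<Sum>q\<in>{1..m}. f j q) = (1 / p) * (\<Sum>j=1..m. (y j)\<^sup>2)
              + 2 * (\<Sum>j=1..m. \<Sum>q=j+1..m. p ^ (q - j - 1) * y j * y q)"
    if mk: "m \<le> k" and E1: "\<And>j. j \<in> {1..m} \<Longrightarrow> e1 j = p/(1+p)"
      and E2d: "\<And>j. j \<in> {1..m} \<Longrightarrow> e2 j j = p/(1+p)"
      and E2o: "\<And>j q. j \<in> {1..m} \<Longrightarrow> q \<in> {1..m} \<Longrightarrow> j < q \<Longrightarrow> e2 j q = p/(1+p) * rr p True (q - j)"
    for m
    unfolding f_def
    by (rule path_sum[OF p0 p1 E1 E2d E2o e2sym _ s0sq]) (use sgj mk in auto)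
  show ?thesis
  proof (intro conjI impI)
    assume nc: "v (k + 1) \<noteq> v 1"
    then have Dp: "D = apr_path p k" unfolding D_def apr_design_def by simp
    have E1: "e1 j = p/(1+p)" if "j \<in> {1..k}" for j
    proof -
      have "j - 1 < k" using that by auto
      then show ?thesis using path1[OF p0 p1, of "j - 1" k True] unfolding e1_def Dp by (simp add: SS_def)
    qed
    have E2d: "e2 j j = p/(1+p)" if "j \<in> {1..k}" for j
      using E1[OF that] unfolding e2_def e1_def of_bool_sq .
    have E2o: "e2 j q = p/(1+p) * rr p True (q - j)" if "j \<in> {1..k}" "q \<in> {1..k}" "j < q" for j q
    proof -
      have "q - 1 - (j - 1) = q - j" using that by auto
      then show ?thesis using path2[OF p0 p1, of "j - 1" "q - 1" k True True] that
        unfolding e2_def Dp by (simp add: SS_def RR_def)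
    qed
    show "measure_pmf.variance D (HT_est Mt Mc Y D v k) =
              (1 / p) * (\<Sum>j=1..k. (y j)\<^sup>2)
              + 2 * (\<Sum>j=1..k. \<Sum>q=j+1..k. p ^ (q - j - 1) * y j * y q)"
      unfolding V by (rule pathpart[OF order_refl E1 E2d E2o])
  next
    assume cyc: "v (k + 1) = v 1"
    have ev: "even k" and k4: "4 \<le> k" using cycle_even[OF comp cyc assms(3,4)] by auto
    have Dc: "D = apr_cycle p k" unfolding D_def apr_design_def using cyc by simp
    have k2: "2 \<le> k" using k4 by simp
    define m where "m = k - 1"
    have km: "k = Suc m" using k1 unfolding m_def by simp
    have m3: "3 \<le> m" using k4 unfolding m_def by simp
    have km2: "k - 2 = m - 1" unfolding m_def by simp
    have cexp: "measure_pmf.expectation D h = measure_pmf.expectation (apr_path p m) (\<lambda>l. h (l @ [\<not> l ! 0 \<and> \<not> l ! (m - 1)]))" for h :: "bool list \<Rightarrow> real"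
      using cyc_exp[OF k2, of p h] unfolding Dc m_def km2[unfolded m_def] .
    have lenP: "length l = m" if "l \<in> set_pmf (apr_path p m)" for l
      using path_len[of m l p] that m3 by simp
    have E1: "e1 j = p/(1+p)" if j: "j \<in> {1..m}" for j
    proof -
      have "e1 j = measure_pmf.expectation (apr_path p m) (\<lambda>l. of_bool (l ! (j - 1)))"
        unfolding e1_def cexp
        by (rule exp_cong) (use j lenP in \<open>auto simp: nth_append\<close>)
      moreover have "j - 1 < m" using j by auto
      ultimately show ?thesis using path1[OF p0 p1, of "j - 1" m True] by (simp add: SS_def)
    qed
    have E2: "e2 j q = measure_pmf.expectation (apr_path p m) (\<lambda>l. of_bool (l ! (j - 1)) * of_bool (l ! (q - 1)))"
      if j: "j \<in> {1..m}" and q: "q \<in> {1..m}" for j q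
      unfolding e2_def cexp
      by (rule exp_cong) (use j q lenP in \<open>auto simp: nth_append\<close>)
    have E2d: "e2 j j = p/(1+p)" if j: "j \<in> {1..m}" for j
    proof -
      have "j - 1 < m" using j by auto
      then show ?thesis using E2[OF j j] path1[OF p0 p1, of "j - 1" m True] unfolding of_bool_sq by (simp add: SS_def)
    qed
    have E2o: "e2 j q = p/(1+p) * rr p True (q - j)" if "j \<in> {1..m}" "q \<in> {1..m}" "j < q" for j q
    proof -
      have "q - 1 - (j - 1) = q - j" using that by auto
      then show ?thesis using path2[OF p0 p1, of "j - 1" "q - 1" m True True] that E2[OF that(1,2)]
        by (simp add: SS_def RR_def)
    qed
    define P where "P = (1 + p^(k-1)) / (1+p)^2"
    have ek: "e1 k = P"
    proof -
      have "e1 k = measure_pmf.expectation (apr_path p m) (\<lambda>l. of_bool (l ! 0 = False) * of_bool (l ! (m - 1) = False))"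
        unfolding e1_def cexp
        by (rule exp_cong) (use lenP km in \<open>auto simp: nth_append\<close>)
      also have "\<dots> = SS p False * RR p False (m - 1 - 0) False"
        by (rule path2[OF p0 p1]) (use m3 in auto)
      also have "m - 1 - 0 = k - 2" using km2 by simp
      finally show ?thesis using Lc[OF p0 ev k4] unfolding P_def by simp
    qed
    have ekk: "e2 k k = P" using ek unfolding e1_def e2_def of_bool_sq .
    have sgk: "sg k * sg k = 1" using sgj[of k] k1 s0sq by (simp add: algebra_simps)
    have fkk: "f k k = (p\<^sup>2 + 2 * p - p ^ (k - 1)) / (1 + p ^ (k - 1)) * (y k)\<^sup>2"
      unfolding f_def ekk ek by (rule Ld[OF p0 sgk P_def])
    have E2k: "e2 j k = measure_pmf.expectation (apr_path p m) (\<lambda>l. of_bool (l ! (j - 1)) * of_bool (\<not> l ! 0 \<and> \<not> l ! (m - 1)))"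
      if j: "j \<in> {1..m}" for j
      unfolding e2_def cexp
      by (rule exp_cong) (use j lenP km in \<open>auto simp: nth_append\<close>)
    have Rj: "(e2 j k - e1 j * e1 k) / (e1 j * e1 k) = (1 - (-p) ^ (k - 1 - j)) * (1 - (-p) ^ (j - 1)) / (1 + p ^ (k - 1)) - 1"
      if j: "j \<in> {1..m}" for j
    proof -
      consider "j = 1" | "j = m" | "1 < j \<and> j < m" using j by fastforce
      then show ?thesis
      proof cases
        case 1
        have "e2 j k = measure_pmf.expectation (apr_path p m) (\<lambda>l. 0)"
          unfolding E2k[OF j] using 1 by (intro arg_cong[where f="measure_pmf.expectation _"]) (auto simp: fun_eq_iff)
        then have "e2 j k = 0" by simp
        then show ?thesis using Le0[OF p0 P_def] E1[OF j] ek 1 by simp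
      next
        case 2
        have "e2 j k = measure_pmf.expectation (apr_path p m) (\<lambda>l. 0)"
          unfolding E2k[OF j] using 2 by (intro arg_cong[where f="measure_pmf.expectation _"]) (auto simp: fun_eq_iff)
        then have "e2 j k = 0" by simp
        moreover have "k - 1 - j = 0" using 2 km by simp
        ultimately show ?thesis using Le0[OF p0 P_def] E1[OF j] ek by simp
      next
        case 3
        have "e2 j k = measure_pmf.expectation (apr_path p m)
            (\<lambda>l. of_bool (l ! 0 = False) * (of_bool (l ! (j - 1) = True) * of_bool (l ! (m - 1) = False)))"
          unfolding E2k[OF j] by (intro arg_cong[where f="measure_pmf.expectation _"]) (auto simp: fun_eq_iff)
        also have "\<dots> = SS p False * (RR p False (j - 1 - 0) True * RR p True (m - 1 - (j - 1)) False)"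
          by (rule path3[OF p0 p1]) (use 3 in auto)
        also have "m - 1 - (j - 1) = k - 1 - j" using 3 km by simp
        finally have "e2 j k = SS p False * (RR p False (j - 1) True * RR p True (k - 1 - j) False)" by simp
        then show ?thesis using Le[OF p0 P_def, of "j - 1" "k - 1 - j"] E1[OF j] ek by simp
      qed
    qed
    have fjk: "f j k = (-1) ^ j * ((1 - (-p) ^ (k - 1 - j)) * (1 - (-p) ^ (j - 1)) / (1 + p ^ (k - 1)) - 1) * y j * y k"
      if j: "j \<in> {1..m}" for j
    proof -
      have r: "f j k = (sg j * sg k) * (y j * y k) * ((e2 j k - e1 j * e1 k) / (e1 j * e1 k))"
        unfolding f_def by (rule reorg)
      have "sg j * sg k = (-1)^(k - j)" using sgn_prod[of j k s0] sgj[of j] sgj[of k] j km s0sq by simp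
      also have "\<dots> = (-1)^j" using neg1_pow[OF ev, of j] j km by simp
      finally show ?thesis unfolding r Rj[OF j] by (simp add: algebra_simps)
    qed
    have SL: "(\<Sum>j\<in>{1..k}. \<Sum>q\<in>{1..k}. f j q) = 
        (\<Sum>j\<in>{1..m}. \<Sum>q\<in>{1..m}. f j q) + 2 * (\<Sum>j\<in>{1..m}. f j k) + f k k"
      unfolding km by (rule split_last[OF fsym])
    have "measure_pmf.variance D (HT_est Mt Mc Y D v k) = 
        (\<Sum>j\<in>{1..m}. \<Sum>q\<in>{1..m}. f j q) + 2 * (\<Sum>j\<in>{1..m}. f j k) + f k k"
      using V SL by simp
    also have "(\<Sum>j\<in>{1..m}. \<Sum>q\<in>{1..m}. f j q) = (1 / p) * (\<Sum>j=1..m. (y j)\<^sup>2)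
              + 2 * (\<Sum>j=1..m. \<Sum>q=j+1..m. p ^ (q - j - 1) * y j * y q)"
      by (rule pathpart) (use km E1 E2d E2o in auto)
    also have "(\<Sum>j\<in>{1..m}. f j k) = (\<Sum>j=1..m. (-1) ^ j *
                  ((1 - (-p) ^ (k - 1 - j)) * (1 - (-p) ^ (j - 1)) / (1 + p ^ (k - 1)) - 1)
                  * y j * y k)"
      by (rule sum.cong) (use fjk in auto)
    finally show "measure_pmf.variance D (HT_est Mt Mc Y D v k) =
              (1 / p) * (\<Sum>j=1..k-1. (y j)\<^sup>2)
              + 2 * (\<Sum>j=1..k-1. \<Sum>q=j+1..k-1. p ^ (q - j - 1) * y j * y q)
              + (p\<^sup>2 + 2 * p - p ^ (k - 1)) / (1 + p ^ (k - 1)) * (y k)\<^sup>2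
              + 2 * (\<Sum>j=1..k-1. (-1) ^ j *
                  ((1 - (-p) ^ (k - 1 - j)) * (1 - (-p) ^ (j - 1)) / (1 + p ^ (k - 1)) - 1)
                  * y j * y k)"
      unfolding fkk m_def by simp
  qed
qed


end
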